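(* Fix $\mathcal D>0$ and let $J(N,\widetilde D)$ be a twice continuously differentiable real function of $N>0$, $\widetilde D>0$. For $T>0$ consider $$\min_{N>0,\ \widetilde D\ge 2\mathcal D} J(N,\widetilde D)\quad\text{subject to}\quad N\widetilde D=T .$$ Let $I\subseteq(0,\infty)$ be an open interval and assume that for every $T\in I$ this problem has a unique minimizer $(N^\star(T),\widetilde D^\star(T))$ with $\widetilde D^\star(T)>2\mathcal D$, and that $T\mapsto (N^\star(T),\widetilde D^\star(T))$ is continuous on $I$. Writing $\mu=\log N$, $\nu=\log\widetilde D$ and $J(\mu,\nu):=J(e^\mu,e^\nu)$, assume that at every such optimum $(\mu^\star(T),\nu^\star(T))$: (1) $\partial^2 J/\partial\mu\partial\nu\le 0$; (2) $\partial^2J/\partial\mu^2>0$; (3) $\partial^2J/\partial\nu^2>0$. Then for all $T_1<T_2$ in $I$: $N^\star(T_2)>N^\star(T_1)$ and $\widetilde D^\star(T_2)>\widetilde D^\star(T_1)$.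
   Context: In the paper's application, $N$ is the model size, $D$ the number of training tokens, $\widetilde D=6D+2\mathcal D$ the effective data with $\mathcal D$ the test-set size, and $J$ the two-part code length; the claim is purely analytic. *)

theory Defs
  imports "HOL-Analysis.Analysis"
begin

definition C2_on :: "(real \<times> real) set \<Rightarrow> (real \<times> real \<Rightarrow> real) \<Rightarrow> bool" where
  "C2_on S f \<longleftrightarrow>
     (\<exists>f' :: real \<times> real \<Rightarrow> ((real \<times> real) \<Rightarrow>\<^sub>L real).
      \<exists>f'' :: real \<times> real \<Rightarrow> ((real \<times> real) \<Rightarrow>\<^sub>L ((real \<times> real) \<Rightarrow>\<^sub>L real)).
        (\<forall>x\<in>S. (f has_derivative blinfun_apply (f' x)) (at x)) \<and>
        (\<forall>x\<in>S. (f' has_derivative blinfun_apply (f'' x)) (at x)) \<and>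
        continuous_on S f'')"

definition Jlog :: "(real \<Rightarrow> real \<Rightarrow> real) \<Rightarrow> real \<Rightarrow> real \<Rightarrow> real" where
  "Jlog J \<mu> \<nu> = J (exp \<mu>) (exp \<nu>)"

definition d2_mu_mu :: "(real \<Rightarrow> real \<Rightarrow> real) \<Rightarrow> real \<Rightarrow> real \<Rightarrow> real" where
  "d2_mu_mu J \<mu> \<nu> = deriv (\<lambda>m. deriv (\<lambda>m'. Jlog J m' \<nu>) m) \<mu>"

definition d2_nu_nu :: "(real \<Rightarrow> real \<Rightarrow> real) \<Rightarrow> real \<Rightarrow> real \<Rightarrow> real" where
  "d2_nu_nu J \<mu> \<nu> = deriv (\<lambda>n. deriv (\<lambda>n'. Jlog J \<mu> n') n) \<nu>"

definition d2_mu_nu :: "(real \<Rightarrow> real \<Rightarrow> real) \<Rightarrow> real \<Rightarrow> real \<Rightarrow> real" where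
  "d2_mu_nu J \<mu> \<nu> = deriv (\<lambda>n. deriv (\<lambda>m. Jlog J m n) \<mu>) \<nu>"

end

theory Submission
  imports Defs
begin

lemma lin2:
  fixes D :: "real \<times> real \<Rightarrow> real"
  assumes "bounded_linear D"
  shows "D (a, b) = a * D (1,0) + b * D (0,1)"
proof -
  have l: "linear D" using assms bounded_linear.linear by blast
  have "(a,b) = a *\<^sub>R (1,0) + b *\<^sub>R ((0,1)::real\<times>real)" by simp
  then have "D (a,b) = D (a *\<^sub>R (1,0) + b *\<^sub>R (0,1))" by simp
  also have "\<dots> = D (a *\<^sub>R (1,0)) + D (b *\<^sub>R (0,1))" by (rule linear_add[OF l])
  also have "\<dots> = a * D (1,0) + b * D (0,1)" using linear_scale[OF l, of a "(1,0)"] linear_scale[OF l, of b "(0,1)"] by simp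
  finally show ?thesis .
qed

lemma chain2:
  fixes g :: "real \<times> real \<Rightarrow> real"
  assumes g: "(g has_derivative D) (at (X s, Y s))"
    and X: "(X has_real_derivative X') (at s)" and Y: "(Y has_real_derivative Y') (at s)"
  shows "((\<lambda>s. g (X s, Y s)) has_real_derivative (X' * D (1,0) + Y' * D (0,1))) (at s)"
proof -
  have bl: "bounded_linear D" using g has_derivative_bounded_linear by blast
  have P: "((\<lambda>s. (X s, Y s)) has_derivative (\<lambda>h. (X' * h, Y' * h))) (at s)"
    using X Y unfolding has_field_derivative_def by (intro has_derivative_Pair) auto
  have "((\<lambda>s. g (X s, Y s)) has_derivative (\<lambda>h. D (X' * h, Y' * h))) (at s)"
    using has_derivative_compose[OF P g] .
  moreover have "(\<lambda>h. D (X' * h, Y' * h)) = (*) (X' * D (1,0) + Y' * D (0,1))"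
  proof
    fix h show "D (X' * h, Y' * h) = (X' * D (1,0) + Y' * D (0,1)) * h"
      using lin2[OF bl, of "X' * h" "Y' * h"] by (simp add: algebra_simps)
  qed
  ultimately show ?thesis unfolding has_field_derivative_def by simp
qed

lemma boxdist: "dist ((a::real),(b::real)) (c,d) \<le> \<bar>a - c\<bar> + \<bar>b - d\<bar>"
  using sqrt_sum_squares_le_sum_abs[of "a - c" "b - d"] by (simp add: dist_Pair_Pair dist_real_def)

lemma schwarz:
  fixes F :: "real \<times> real \<Rightarrow> real"
  assumes S: "open S" and x: "(x0,y0) \<in> S"
    and d1: "\<And>x y. (x,y) \<in> S \<Longrightarrow> ((\<lambda>u. F (u,y)) has_real_derivative f1 (x,y)) (at x)"
    and d2: "\<And>x y. (x,y) \<in> S \<Longrightarrow> ((\<lambda>v. F (x,v)) has_real_derivative f2 (x,y)) (at y)"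
    and d12: "\<And>x y. (x,y) \<in> S \<Longrightarrow> ((\<lambda>v. f1 (x,v)) has_real_derivative f12 (x,y)) (at y)"
    and d21: "\<And>x y. (x,y) \<in> S \<Longrightarrow> ((\<lambda>u. f2 (u,y)) has_real_derivative f21 (x,y)) (at x)"
    and c12: "isCont f12 (x0,y0)" and c21: "isCont f21 (x0,y0)"
  shows "f12 (x0,y0) = f21 (x0,y0)"
proof (rule ccontr)
  assume ne: "f12 (x0,y0) \<noteq> f21 (x0,y0)"
  define e where "e = \<bar>f12 (x0,y0) - f21 (x0,y0)\<bar> / 4"
  have e: "e > 0" using ne by (simp add: e_def)
  obtain d1' where d1': "d1' > 0" "\<And>p. dist p (x0,y0) < d1' \<Longrightarrow> dist (f12 p) (f12 (x0,y0)) < e"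
    using c12 e unfolding continuous_at_eps_delta by blast
  obtain d2' where d2': "d2' > 0" "\<And>p. dist p (x0,y0) < d2' \<Longrightarrow> dist (f21 p) (f21 (x0,y0)) < e"
    using c21 e unfolding continuous_at_eps_delta by blast
  obtain d3 where d3: "d3 > 0" "ball (x0,y0) d3 \<subseteq> S" using S x by (rule openE)
  define d where "d = min d1' (min d2' d3)"
  have d: "d > 0" using d1' d2' d3 by (simp add: d_def)
  define s where "s = d / 3"
  have s: "s > 0" using d by (simp add: s_def)
  have inbox: "dist (u,v) (x0,y0) < d" if "x0 \<le> u" "u \<le> x0 + s" "y0 \<le> v" "v \<le> y0 + s" for u v
    using boxdist[of u v x0 y0] that s by (simp add: s_def)
  have inS: "(u,v) \<in> S" if "x0 \<le> u" "u \<le> x0 + s" "y0 \<le> v" "v \<le> y0 + s" for u v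
    using inbox[OF that] d3 by (auto simp: d_def dist_commute)
  define Del where "Del = F (x0+s,y0+s) - F (x0+s,y0) - F (x0,y0+s) + F (x0,y0)"
  have "\<exists>z. (x0 < z) \<and> (z < x0 + s) \<and> ((F (x0+s,y0+s) - F (x0+s,y0)) - (F (x0,y0+s) - F (x0,y0)) = ((x0+s) - x0) * (f1 (z,y0+s) - f1 (z,y0)))"
    by (rule MVT2[of x0 "x0+s" "\<lambda>u. F (u,y0+s) - F (u,y0)" "\<lambda>u. f1 (u,y0+s) - f1 (u,y0)"]) (use s in \<open>auto intro!: DERIV_diff d1 inS\<close>)
  then obtain z where z: "x0 < z" "z < x0 + s" "(F (x0+s,y0+s) - F (x0+s,y0)) - (F (x0,y0+s) - F (x0,y0)) = ((x0+s) - x0) * (f1 (z,y0+s) - f1 (z,y0))" by blast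
  have "\<exists>w. (y0 < w) \<and> (w < y0 + s) \<and> (f1 (z,y0+s) - f1 (z,y0) = ((y0+s) - y0) * f12 (z,w))"
    by (rule MVT2[of y0 "y0+s" "\<lambda>v. f1 (z,v)" "\<lambda>v. f12 (z,v)"]) (use s z in \<open>auto intro!: d12 inS\<close>)
  then obtain w where w: "y0 < w" "w < y0 + s" "f1 (z,y0+s) - f1 (z,y0) = ((y0+s) - y0) * f12 (z,w)" by blast
  have "\<exists>z'. (y0 < z') \<and> (z' < y0 + s) \<and> ((F (x0+s,y0+s) - F (x0,y0+s)) - (F (x0+s,y0) - F (x0,y0)) = ((y0+s) - y0) * (f2 (x0+s,z') - f2 (x0,z')))"
    by (rule MVT2[of y0 "y0+s" "\<lambda>v. F (x0+s,v) - F (x0,v)" "\<lambda>v. f2 (x0+s,v) - f2 (x0,v)"]) (use s in \<open>auto intro!: DERIV_diff d2 inS\<close>)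
  then obtain z' where z': "y0 < z'" "z' < y0 + s" "(F (x0+s,y0+s) - F (x0,y0+s)) - (F (x0+s,y0) - F (x0,y0)) = ((y0+s) - y0) * (f2 (x0+s,z') - f2 (x0,z'))" by blast
  have "\<exists>w'. (x0 < w') \<and> (w' < x0 + s) \<and> (f2 (x0+s,z') - f2 (x0,z') = ((x0+s) - x0) * f21 (w',z'))"
    by (rule MVT2[of x0 "x0+s" "\<lambda>u. f2 (u,z')" "\<lambda>u. f21 (u,z')"]) (use s z' in \<open>auto intro!: d21 inS\<close>)
  then obtain w' where w': "x0 < w'" "w' < x0 + s" "f2 (x0+s,z') - f2 (x0,z') = ((x0+s) - x0) * f21 (w',z')" by blast
  have "s * s * f12 (z,w) = s * s * f21 (w',z')"
    using z(3) w(3) z'(3) w'(3) by (simp add: algebra_simps)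
  then have eq: "f12 (z,w) = f21 (w',z')" using s by simp
  have "dist (f12 (z,w)) (f12 (x0,y0)) < e"
    using d1' inbox[of z w] z w by (auto simp: d_def)
  moreover have "dist (f21 (w',z')) (f21 (x0,y0)) < e"
    using d2' inbox[of w' z'] z' w' by (auto simp: d_def)
  ultimately have "\<bar>f12 (x0,y0) - f21 (x0,y0)\<bar> < 2 * e"
    using eq by (simp add: dist_real_def)
  then show False using e by (simp add: e_def)
qed

lemma part1:
  fixes g :: "real \<times> real \<Rightarrow> real"
  assumes "(g has_derivative D) (at (x,y))"
  shows "((\<lambda>u. g (u,y)) has_real_derivative D (1,0)) (at x)"
  using chain2[of g D "\<lambda>u. u" x "\<lambda>u. y" 1 0] assms by (auto intro!: derivative_eq_intros)

lemma part2:
  fixes g :: "real \<times> real \<Rightarrow> real"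
  assumes "(g has_derivative D) (at (x,y))"
  shows "((\<lambda>v. g (x,v)) has_real_derivative D (0,1)) (at y)"
  using chain2[of g D "\<lambda>u. x" y "\<lambda>u. u" 0 1] assms by (auto intro!: derivative_eq_intros)

lemma seg:
  fixes x y c r s :: real
  assumes "\<bar>x - c\<bar> < r" "\<bar>y - c\<bar> < r" "0 \<le> s" "s \<le> 1"
  shows "\<bar>x + s * (y - x) - c\<bar> < r"
proof -
  have "x + s * (y - x) - c = (1 - s) * (x - c) + s * (y - c)" by (simp add: algebra_simps)
  also have "\<bar>\<dots>\<bar> \<le> (1 - s) * \<bar>x - c\<bar> + s * \<bar>y - c\<bar>"
    using assms by (metis abs_mult abs_of_nonneg abs_triangle_ineq diff_ge_0_iff_ge)
  also have "\<dots> < r"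
  proof (cases "s = 1")
    case True then show ?thesis using assms by simp
  next
    case False
    then have "(1 - s) * \<bar>x - c\<bar> < (1 - s) * r" using assms by (intro mult_strict_left_mono) auto
    moreover have "s * \<bar>y - c\<bar> \<le> s * r" using assms by (intro mult_left_mono) auto
    ultimately show ?thesis by (simp add: algebra_simps)
  qed
  finally show ?thesis .
qed

lemma line_incr:
  fixes G :: "real \<Rightarrow> real \<Rightarrow> real"
  assumes "\<And>s. 0 \<le> s \<Longrightarrow> s \<le> 1 \<Longrightarrow>
     ((\<lambda>s. G (m1 + s * (m2 - m1)) (t1 + s * (t2 - t1))) has_real_derivative D s) (at s)"
    and "\<And>s. 0 \<le> s \<Longrightarrow> s \<le> 1 \<Longrightarrow> D s > 0"
  shows "G m1 t1 < G m2 t2"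
proof -
  have "(\<lambda>s. G (m1 + s * (m2 - m1)) (t1 + s * (t2 - t1))) 0 < (\<lambda>s. G (m1 + s * (m2 - m1)) (t1 + s * (t2 - t1))) 1"
    by (rule DERIV_pos_imp_increasing[of 0 1]) (use assms in auto)
  then show ?thesis by simp
qed

lemma local_to_global:
  fixes g :: "real \<Rightarrow> real"
  assumes T12: "T1 < T2" and c: "continuous_on {T1..T2} g"
    and loc: "\<And>a. T1 \<le> a \<Longrightarrow> a < T2 \<Longrightarrow> \<exists>\<delta>>0. \<forall>T. a < T \<and> T < a + \<delta> \<and> T \<le> T2 \<longrightarrow> g a < g T"
  shows "g T1 < g T2"
proof -
  obtain a where a: "a \<in> {T1..T2}" "\<And>y. y \<in> {T1..T2} \<Longrightarrow> g y \<le> g a"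
    using continuous_attains_sup[OF compact_Icc _ c] T12 by auto
  have "a = T2"
  proof (rule ccontr)
    assume "a \<noteq> T2"
    then have "a < T2" using a by auto
    moreover have "T1 \<le> a" using a by auto
    ultimately obtain \<delta> where d: "\<delta> > 0" "\<And>T. a < T \<and> T < a + \<delta> \<and> T \<le> T2 \<Longrightarrow> g a < g T"
      using loc by blast
    define T where "T = min (a + \<delta>/2) T2"
    have "g a < g T" using d \<open>a < T2\<close> by (intro d(2)) (auto simp: T_def)
    moreover have "g T \<le> g a" using a \<open>a < T2\<close> d by (intro a(2)) (auto simp: T_def)
    ultimately show False by simp
  qed
  obtain \<delta> where d: "\<delta> > 0" "\<And>T. T1 < T \<and> T < T1 + \<delta> \<and> T \<le> T2 \<Longrightarrow> g T1 < g T"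
    using loc[of T1] T12 by auto
  define T where "T = min (T1 + \<delta>/2) T2"
  have "g T1 < g T" using d T12 by (intro d(2)) (auto simp: T_def)
  moreover have "g T \<le> g T2" using a \<open>a = T2\<close> T12 d by (auto simp: T_def)
  ultimately show ?thesis by simp
qed

lemma DERIV_eqI: "DERIV f x :> a \<Longrightarrow> a = b \<Longrightarrow> DERIV f x :> b" by simp

theorem mainTheorem10:
  fixes J :: "real \<Rightarrow> real \<Rightarrow> real"
    and \<D> :: real
    and I :: "real set"
    and Nstar Dstar :: "real \<Rightarrow> real"
  assumes Dpos: "\<D> > 0"
    and C2: "C2_on {p. fst p > 0 \<and> snd p > 0} (\<lambda>p. J (fst p) (snd p))"
    and I_open: "open I" and I_interval: "is_interval I" and I_pos: "I \<subseteq> {0<..}"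
    and feasible: "\<forall>T\<in>I. Nstar T > 0 \<and> Dstar T > 2 * \<D> \<and> Nstar T * Dstar T = T"
    and unique_min: "\<forall>T\<in>I. \<forall>N D. N > 0 \<longrightarrow> D \<ge> 2 * \<D> \<longrightarrow> N * D = T \<longrightarrow>
                        (N, D) \<noteq> (Nstar T, Dstar T) \<longrightarrow> J (Nstar T) (Dstar T) < J N D"
    and cont_N: "continuous_on I Nstar" and cont_D: "continuous_on I Dstar"
    and mixed: "\<forall>T\<in>I. d2_mu_nu J (ln (Nstar T)) (ln (Dstar T)) \<le> 0"
    and convex_mu: "\<forall>T\<in>I. d2_mu_mu J (ln (Nstar T)) (ln (Dstar T)) > 0"
    and convex_nu: "\<forall>T\<in>I. d2_nu_nu J (ln (Nstar T)) (ln (Dstar T)) > 0"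
  shows "\<forall>T1\<in>I. \<forall>T2\<in>I. T1 < T2 \<longrightarrow> Nstar T2 > Nstar T1 \<and> Dstar T2 > Dstar T1"
proof -
  define S where "S = {p::real\<times>real. fst p > 0 \<and> snd p > 0}"
  define F where "F = (\<lambda>p::real\<times>real. J (fst p) (snd p))"
  obtain f' :: "real \<times> real \<Rightarrow> ((real \<times> real) \<Rightarrow>\<^sub>L real)"
    and f'' :: "real \<times> real \<Rightarrow> ((real \<times> real) \<Rightarrow>\<^sub>L ((real \<times> real) \<Rightarrow>\<^sub>L real))"
    where fd: "\<And>x. x \<in> S \<Longrightarrow> (F has_derivative blinfun_apply (f' x)) (at x)"
      and f'd: "\<And>x. x \<in> S \<Longrightarrow> (f' has_derivative blinfun_apply (f'' x)) (at x)"
      and fc: "continuous_on S f''"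
    using C2 unfolding C2_on_def S_def F_def by blast
  have Sopen: "open S" unfolding S_def
    by (intro open_Collect_conj open_Collect_less continuous_intros)
  have inS: "(x, y) \<in> S \<longleftrightarrow> x > 0 \<and> y > 0" for x y by (simp add: S_def)
  define f1 where "f1 p = blinfun_apply (f' p) (1,0)" for p
  define f2 where "f2 p = blinfun_apply (f' p) (0,1)" for p
  define f11 where "f11 p = blinfun_apply (blinfun_apply (f'' p) (1,0)) (1,0)" for p
  define f12 where "f12 p = blinfun_apply (blinfun_apply (f'' p) (0,1)) (1,0)" for p
  define f21 where "f21 p = blinfun_apply (blinfun_apply (f'' p) (1,0)) (0,1)" for p
  define f22 where "f22 p = blinfun_apply (blinfun_apply (f'' p) (0,1)) (0,1)" for p
  have f1d: "(f1 has_derivative (\<lambda>h. blinfun_apply (blinfun_apply (f'' p) h) (1,0))) (at p)"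
    if "p \<in> S" for p
    unfolding f1_def by (rule bounded_linear.has_derivative[OF blinfun.bounded_linear_left f'd[OF that]])
  have f2d: "(f2 has_derivative (\<lambda>h. blinfun_apply (blinfun_apply (f'' p) h) (0,1))) (at p)"
    if "p \<in> S" for p
    unfolding f2_def by (rule bounded_linear.has_derivative[OF blinfun.bounded_linear_left f'd[OF that]])
  have cF: "isCont f'' p" if "p \<in> S" for p
    using fc Sopen that continuous_on_eq_continuous_at by blast
  have c1: "isCont f1 p" if "p \<in> S" for p using has_derivative_continuous[OF f1d[OF that]] .
  have c2: "isCont f2 p" if "p \<in> S" for p using has_derivative_continuous[OF f2d[OF that]] .
  have c11: "isCont f11 p" if "p \<in> S" for p unfolding f11_def by (intro continuous_intros cF[OF that])
  have c12: "isCont f12 p" if "p \<in> S" for p unfolding f12_def by (intro continuous_intros cF[OF that])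
  have c21: "isCont f21 p" if "p \<in> S" for p unfolding f21_def by (intro continuous_intros cF[OF that])
  have c22: "isCont f22 p" if "p \<in> S" for p unfolding f22_def by (intro continuous_intros cF[OF that])
  have sym: "f12 p = f21 p" if "p \<in> S" for p
  proof -
    obtain x y where p: "p = (x,y)" by (cases p)
    show ?thesis unfolding p
    proof (rule schwarz[OF Sopen, of x y F f1 f2 f12 f21])
      show "(x,y) \<in> S" using that p by simp
      show "((\<lambda>u. F (u, y')) has_real_derivative f1 (x', y')) (at x')" if "(x',y') \<in> S" for x' y'
        using part1[OF fd[OF that]] unfolding f1_def .
      show "((\<lambda>v. F (x', v)) has_real_derivative f2 (x', y')) (at y')" if "(x',y') \<in> S" for x' y'
        using part2[OF fd[OF that]] unfolding f2_def .
      show "((\<lambda>v. f1 (x', v)) has_real_derivative f12 (x', y')) (at y')" if "(x',y') \<in> S" for x' y'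
        using part2[OF f1d[OF that]] unfolding f12_def .
      show "((\<lambda>u. f2 (u, y')) has_real_derivative f21 (x', y')) (at x')" if "(x',y') \<in> S" for x' y'
        using part1[OF f2d[OF that]] unfolding f21_def .
      show "isCont f12 (x,y)" using c12 that p by simp
      show "isCont f21 (x,y)" using c21 that p by simp
    qed
  qed
  have chF: "DERIV (\<lambda>s. J (X s) (Y s)) s :> X' * f1 (X s, Y s) + Y' * f2 (X s, Y s)"
    if "DERIV X s :> X'" "DERIV Y s :> Y'" "X s > 0" "Y s > 0" for X Y s X' Y'
    using chain2[where g=F and D="blinfun_apply (f' (X s, Y s))", OF fd[of "(X s, Y s)"] that(1,2)] that
    by (simp add: F_def f1_def f2_def inS)
  have chf1: "DERIV (\<lambda>s. f1 (X s, Y s)) s :> X' * f11 (X s, Y s) + Y' * f12 (X s, Y s)"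
    if "DERIV X s :> X'" "DERIV Y s :> Y'" "X s > 0" "Y s > 0" for X Y s X' Y'
    using chain2[where g=f1 and D="\<lambda>h. blinfun_apply (blinfun_apply (f'' (X s, Y s)) h) (1,0)",
        OF f1d[of "(X s, Y s)"] that(1,2)] that
    by (simp add: f11_def f12_def inS)
  have chf2: "DERIV (\<lambda>s. f2 (X s, Y s)) s :> X' * f21 (X s, Y s) + Y' * f22 (X s, Y s)"
    if "DERIV X s :> X'" "DERIV Y s :> Y'" "X s > 0" "Y s > 0" for X Y s X' Y'
    using chain2[where g=f2 and D="\<lambda>h. blinfun_apply (blinfun_apply (f'' (X s, Y s)) h) (0,1)",
        OF f2d[of "(X s, Y s)"] that(1,2)] that
    by (simp add: f21_def f22_def inS)
  have dJm: "DERIV (\<lambda>m. Jlog J m n) m :> exp m * f1 (exp m, exp n)" for m n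
    using chF[where X=exp and Y="\<lambda>_. exp n" and s=m, OF DERIV_exp DERIV_const]
    by (simp add: Jlog_def)
  have dJn: "DERIV (\<lambda>n. Jlog J m n) n :> exp n * f2 (exp m, exp n)" for m n
    using chF[where X="\<lambda>_. exp m" and Y=exp and s=n, OF DERIV_const DERIV_exp]
    by (simp add: Jlog_def)
  have dd1: "deriv (\<lambda>m'. Jlog J m' n) = (\<lambda>m. exp m * f1 (exp m, exp n))" for n
    by (rule ext, rule DERIV_imp_deriv, rule dJm)
  have dd2: "deriv (\<lambda>n'. Jlog J m n') = (\<lambda>n. exp n * f2 (exp m, exp n))" for m
    by (rule ext, rule DERIV_imp_deriv, rule dJn)
  have d2mm: "d2_mu_mu J \<mu> \<nu> = exp \<mu> * f1 (exp \<mu>, exp \<nu>) + exp \<mu> * (exp \<mu> * f11 (exp \<mu>, exp \<nu>))" for \<mu> \<nu>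
  proof -
    have "DERIV (\<lambda>m. exp m * f1 (exp m, exp \<nu>)) \<mu> :> exp \<mu> * f1 (exp \<mu>, exp \<nu>) + exp \<mu> * (exp \<mu> * f11 (exp \<mu>, exp \<nu>))"
      by (rule DERIV_eqI[OF DERIV_mult[OF DERIV_exp chf1[where X=exp and Y="\<lambda>_. exp \<nu>" and s=\<mu>, OF DERIV_exp DERIV_const]]])
        (simp_all add: algebra_simps)
    then show ?thesis unfolding d2_mu_mu_def dd1 by (rule DERIV_imp_deriv)
  qed
  have d2nn: "d2_nu_nu J \<mu> \<nu> = exp \<nu> * f2 (exp \<mu>, exp \<nu>) + exp \<nu> * (exp \<nu> * f22 (exp \<mu>, exp \<nu>))" for \<mu> \<nu>
  proof -
    have "DERIV (\<lambda>n. exp n * f2 (exp \<mu>, exp n)) \<nu> :> exp \<nu> * f2 (exp \<mu>, exp \<nu>) + exp \<nu> * (exp \<nu> * f22 (exp \<mu>, exp \<nu>))"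
      by (rule DERIV_eqI[OF DERIV_mult[OF DERIV_exp chf2[where X="\<lambda>_. exp \<mu>" and Y=exp and s=\<nu>, OF DERIV_const DERIV_exp]]])
        (simp_all add: algebra_simps)
    then show ?thesis unfolding d2_nu_nu_def dd2 by (rule DERIV_imp_deriv)
  qed
  have d2mn: "d2_mu_nu J \<mu> \<nu> = exp \<mu> * (exp \<nu> * f12 (exp \<mu>, exp \<nu>))" for \<mu> \<nu>
  proof -
    have "DERIV (\<lambda>n. exp \<mu> * f1 (exp \<mu>, exp n)) \<nu> :> exp \<mu> * (exp \<nu> * f12 (exp \<mu>, exp \<nu>))"
      by (rule DERIV_eqI[OF DERIV_cmult[OF chf1[where X="\<lambda>_. exp \<mu>" and Y=exp and s=\<nu>, OF DERIV_const DERIV_exp]]])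
        (simp_all add: algebra_simps)
    then show ?thesis unfolding d2_mu_nu_def DERIV_imp_deriv[OF dJm] by (rule DERIV_imp_deriv)
  qed
  define G where "G \<mu> t = exp \<mu> * f1 (exp \<mu>, exp (t-\<mu>)) - exp (t-\<mu>) * f2 (exp \<mu>, exp (t-\<mu>))" for \<mu> t
  define Gm where "Gm \<mu> t = exp \<mu> * f1 (exp \<mu>, exp (t-\<mu>)) + exp \<mu> * exp \<mu> * f11 (exp \<mu>, exp (t-\<mu>))
     - exp \<mu> * exp (t-\<mu>) * f12 (exp \<mu>, exp (t-\<mu>)) + exp (t-\<mu>) * f2 (exp \<mu>, exp (t-\<mu>))
     - exp \<mu> * exp (t-\<mu>) * f21 (exp \<mu>, exp (t-\<mu>)) + exp (t-\<mu>) * exp (t-\<mu>) * f22 (exp \<mu>, exp (t-\<mu>))" for \<mu> t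
  define Gt where "Gt \<mu> t = exp \<mu> * exp (t-\<mu>) * f12 (exp \<mu>, exp (t-\<mu>)) - exp (t-\<mu>) * f2 (exp \<mu>, exp (t-\<mu>))
     - exp (t-\<mu>) * exp (t-\<mu>) * f22 (exp \<mu>, exp (t-\<mu>))" for \<mu> t
  have dphi: "DERIV (\<lambda>u. J (exp u) (exp (t-u))) u :> G u t" for u t
  proof -
    have hY: "DERIV (\<lambda>u. exp (t-u)) u :> - exp (t-u)" by (auto intro!: derivative_eq_intros)
    show ?thesis
      by (rule DERIV_eqI[OF chF[where X=exp and Y="\<lambda>u. exp (t-u)" and s=u, OF DERIV_exp hY]])
        (simp_all add: G_def)
  qed
  have dline: "DERIV (\<lambda>s. G (m1 + s*a) (t1 + s*b)) s :> a * Gm (m1 + s*a) (t1 + s*b) + b * Gt (m1 + s*a) (t1 + s*b)"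
    for m1 t1 a b s
  proof -
    have hX: "DERIV (\<lambda>s. exp (m1 + s*a)) s :> exp (m1 + s*a) * a" by (auto intro!: derivative_eq_intros)
    have hY: "DERIV (\<lambda>s. exp ((t1 + s*b) - (m1 + s*a))) s :> exp ((t1 + s*b) - (m1 + s*a)) * (b - a)"
      by (auto intro!: derivative_eq_intros simp: algebra_simps)
    show ?thesis
      unfolding G_def
      by (rule DERIV_eqI[OF DERIV_diff[OF DERIV_mult[OF hX chf1[OF hX hY]] DERIV_mult[OF hY chf2[OF hX hY]]]])
        (simp_all add: Gm_def Gt_def algebra_simps)
  qed
  have Fermat: "G (ln (Nstar T)) (ln T) = 0" if T: "T \<in> I" for T
  proof -
    have N: "Nstar T > 0" and D: "Dstar T > 2 * \<D>" and ND: "Nstar T * Dstar T = T"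
      using feasible T by auto
    have Tpos: "T > 0" using I_pos T by auto
    have Dp: "Dstar T > 0" using D Dpos by simp
    have lnT: "ln T = ln (Nstar T) + ln (Dstar T)" using ln_mult_pos[OF N Dp] ND by simp
    define d where "d = ln (Dstar T) - ln (2 * \<D>)"
    have d: "d > 0" using D Dpos by (simp add: d_def)
    show ?thesis
    proof (rule DERIV_local_min[OF dphi d], intro allI impI)
      fix y assume y: "\<bar>ln (Nstar T) - y\<bar> < d"
      have "ln T - y > ln (2 * \<D>)" using y lnT by (simp add: d_def abs_less_iff)
      then have "exp (ln (2 * \<D>)) < exp (ln T - y)" by simp
      then have big: "exp (ln T - y) > 2 * \<D>" using Dpos by simp
      have prod: "exp y * exp (ln T - y) = T" using Tpos by (simp add: exp_add[symmetric])
      have lhs: "J (exp (ln (Nstar T))) (exp (ln T - ln (Nstar T))) = J (Nstar T) (Dstar T)"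
        using lnT N Dp by simp
      have "J (Nstar T) (Dstar T) \<le> J (exp y) (exp (ln T - y))"
      proof (cases "(exp y, exp (ln T - y)) = (Nstar T, Dstar T)")
        case True then show ?thesis by simp
      next
        case False
        have "J (Nstar T) (Dstar T) < J (exp y) (exp (ln T - y))"
          using unique_min[rule_format, OF T, of "exp y" "exp (ln T - y)"] big prod False by simp
        then show ?thesis by simp
      qed
      then show "J (exp (ln (Nstar T))) (exp (ln T - ln (Nstar T))) \<le> J (exp y) (exp (ln T - y))"
        using lhs by simp
    qed
  qed
  have cc: "isCont (\<lambda>q. h (exp (fst q), exp (snd q - fst q))) q" if hc: "\<And>p. p \<in> S \<Longrightarrow> isCont h p" for h q
    by (rule isCont_o2[where f="\<lambda>q. (exp (fst q), exp (snd q - fst q))" and a=q and g=h]) (auto intro!: continuous_intros hc simp: inS)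
  have loc: "\<exists>\<delta>>0. \<forall>T. T \<in> I \<and> T0 < T \<and> T < T0 + \<delta> \<longrightarrow> Nstar T0 < Nstar T \<and> Dstar T0 < Dstar T"
    if T0: "T0 \<in> I" for T0
  proof -
    have N0: "Nstar T0 > 0" and D0: "Dstar T0 > 0" and ND0: "Nstar T0 * Dstar T0 = T0"
      using feasible T0 Dpos by auto
    have T0pos: "T0 > 0" using I_pos T0 by auto
    define \<mu>0 where "\<mu>0 = ln (Nstar T0)"
    define \<nu>0 where "\<nu>0 = ln (Dstar T0)"
    define t0 where "t0 = ln T0"
    have eq0: "t0 - \<mu>0 = \<nu>0" using ln_mult_pos[OF N0 D0] ND0 by (simp add: t0_def \<mu>0_def \<nu>0_def)
    have p0S: "(exp \<mu>0, exp \<nu>0) \<in> S" by (simp add: inS)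
    have A: "d2_mu_mu J \<mu>0 \<nu>0 > 0" using convex_mu T0 by (simp add: \<mu>0_def \<nu>0_def)
    have B: "d2_mu_nu J \<mu>0 \<nu>0 \<le> 0" using mixed T0 by (simp add: \<mu>0_def \<nu>0_def)
    have C: "d2_nu_nu J \<mu>0 \<nu>0 > 0" using convex_nu T0 by (simp add: \<mu>0_def \<nu>0_def)
    have Gm0: "Gm \<mu>0 t0 = d2_mu_mu J \<mu>0 \<nu>0 - 2 * d2_mu_nu J \<mu>0 \<nu>0 + d2_nu_nu J \<mu>0 \<nu>0"
      unfolding Gm_def d2mm d2nn d2mn eq0 using sym[OF p0S] by (simp add: algebra_simps)
    have Gt0: "Gt \<mu>0 t0 = d2_mu_nu J \<mu>0 \<nu>0 - d2_nu_nu J \<mu>0 \<nu>0"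
      unfolding Gt_def d2mm d2nn d2mn eq0 by (simp add: algebra_simps)
    define gm where "gm q = Gm (fst q) (snd q)" for q :: "real \<times> real"
    define gt where "gt q = Gt (fst q) (snd q)" for q :: "real \<times> real"
    define q0 where "q0 = (\<mu>0, t0)"
    have cgm: "isCont gm q0" unfolding gm_def Gm_def
      by (intro continuous_intros cc[OF c1] cc[OF c2] cc[OF c11] cc[OF c12] cc[OF c21] cc[OF c22])
    have cgt: "isCont gt q0" unfolding gt_def Gt_def
      by (intro continuous_intros cc[OF c1] cc[OF c2] cc[OF c11] cc[OF c12] cc[OF c21] cc[OF c22])
    have cgs: "isCont (\<lambda>q. gm q + gt q) q0" by (intro continuous_intros cgm cgt)
    have gm0: "gm q0 > 0" using Gm0 A B C by (simp add: gm_def q0_def)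
    have gt0: "gt q0 < 0" using Gt0 A B C by (simp add: gt_def q0_def)
    have gs0: "gm q0 + gt q0 > 0" using Gm0 Gt0 A B C by (simp add: gm_def gt_def q0_def)
    obtain e1 where e1: "e1 > 0" "\<And>q. dist q q0 < e1 \<Longrightarrow> dist (gm q) (gm q0) < gm q0"
      using cgm gm0 unfolding continuous_at_eps_delta by blast
    obtain e2 where e2: "e2 > 0" "\<And>q. dist q q0 < e2 \<Longrightarrow> dist (gt q) (gt q0) < - gt q0"
      using cgt gt0 unfolding continuous_at_eps_delta by (metis neg_0_less_iff_less)
    obtain e3 where e3: "e3 > 0" "\<And>q. dist q q0 < e3 \<Longrightarrow> dist (gm q + gt q) (gm q0 + gt q0) < gm q0 + gt q0"
      using cgs gs0 unfolding continuous_at_eps_delta by blast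
    define r where "r = min e1 (min e2 e3) / 2"
    have r: "r > 0" using e1 e2 e3 by (simp add: r_def)
    have box: "Gm \<mu> t > 0 \<and> Gt \<mu> t < 0 \<and> Gm \<mu> t + Gt \<mu> t > 0"
      if "\<bar>\<mu> - \<mu>0\<bar> < r" "\<bar>t - t0\<bar> < r" for \<mu> t
    proof -
      have "dist (\<mu>, t) q0 < 2 * r" using boxdist[of \<mu> t \<mu>0 t0] that by (simp add: q0_def)
      then have "dist (\<mu>, t) q0 < e1" "dist (\<mu>, t) q0 < e2" "dist (\<mu>, t) q0 < e3" by (auto simp: r_def)
      from e1(2)[OF this(1)] e2(2)[OF this(2)] e3(2)[OF this(3)] show ?thesis
        by (auto simp: gm_def gt_def dist_real_def)
    qed
    have cN: "isCont Nstar T0" using cont_N I_open T0 continuous_on_eq_continuous_at by blast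
    have clN: "isCont (\<lambda>T. ln (Nstar T)) T0" using N0 by (intro continuous_intros cN) auto
    have cl: "isCont ln T0" using T0pos by (intro continuous_intros) auto
    obtain d1 where d1: "d1 > 0" "\<And>T. dist T T0 < d1 \<Longrightarrow> dist (ln (Nstar T)) (ln (Nstar T0)) < r"
      using clN r unfolding continuous_at_eps_delta by blast
    obtain d2 where d2: "d2 > 0" "\<And>T. dist T T0 < d2 \<Longrightarrow> dist (ln T) (ln T0) < r"
      using cl r unfolding continuous_at_eps_delta by blast
    show ?thesis
    proof (intro exI[of _ "min d1 d2"] conjI allI impI)
      show "min d1 d2 > 0" using d1 d2 by simp
      fix T assume TT: "T \<in> I \<and> T0 < T \<and> T < T0 + min d1 d2"
      then have T: "T \<in> I" and lt: "T0 < T" by auto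
      have N1: "Nstar T > 0" and D1: "Dstar T > 0" and ND1: "Nstar T * Dstar T = T"
        using feasible T Dpos by auto
      define \<mu>1 where "\<mu>1 = ln (Nstar T)"
      define t1 where "t1 = ln T"
      have eq1: "ln (Dstar T) = t1 - \<mu>1" using ln_mult_pos[OF N1 D1] ND1 by (simp add: t1_def \<mu>1_def)
      have b1: "\<bar>\<mu>1 - \<mu>0\<bar> < r" using d1(2)[of T] TT unfolding \<mu>1_def \<mu>0_def dist_real_def by (smt (verit))
      have b2: "\<bar>t1 - t0\<bar> < r" using d2(2)[of T] TT unfolding t1_def t0_def dist_real_def by (smt (verit))
      have b0: "\<bar>\<mu>0 - \<mu>0\<bar> < r" "\<bar>t0 - t0\<bar> < r" using r by auto
      have tlt: "t0 < t1" using lt T0pos by (simp add: t0_def t1_def)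
      have G0: "G \<mu>0 t0 = 0" using Fermat[OF T0] by (simp add: \<mu>0_def t0_def)
      have G1: "G \<mu>1 t1 = 0" using Fermat[OF T] by (simp add: \<mu>1_def t1_def)
      have inb: "Gm (x + s * (y - x)) (u + s * (v - u)) > 0 \<and> Gt (x + s * (y - x)) (u + s * (v - u)) < 0
          \<and> Gm (x + s * (y - x)) (u + s * (v - u)) + Gt (x + s * (y - x)) (u + s * (v - u)) > 0"
        if "\<bar>x - \<mu>0\<bar> < r" "\<bar>y - \<mu>0\<bar> < r" "\<bar>u - t0\<bar> < r" "\<bar>v - t0\<bar> < r" "0 \<le> s" "s \<le> 1" for x y u v s
      proof -
        have "\<bar>x + s * (y - x) - \<mu>0\<bar> < r" by (rule seg) (use that in auto)
        moreover have "\<bar>u + s * (v - u) - t0\<bar> < r" by (rule seg) (use that in auto)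
        ultimately show ?thesis by (rule box)
      qed
      have m: "\<mu>0 < \<mu>1"
      proof (rule ccontr)
        assume "\<not> \<mu>0 < \<mu>1"
        then have le: "\<mu>1 \<le> \<mu>0" by simp
        have "G \<mu>1 t1 < G \<mu>0 t0"
        proof (rule line_incr[where G=G and ?m1.0="\<mu>1" and ?t1.0=t1 and ?m2.0="\<mu>0" and ?t2.0=t0,
            where D="\<lambda>s. (\<mu>0 - \<mu>1) * Gm (\<mu>1 + s * (\<mu>0 - \<mu>1)) (t1 + s * (t0 - t1))
              + (t0 - t1) * Gt (\<mu>1 + s * (\<mu>0 - \<mu>1)) (t1 + s * (t0 - t1))"])
          fix s :: real
          show "DERIV (\<lambda>s. G (\<mu>1 + s * (\<mu>0 - \<mu>1)) (t1 + s * (t0 - t1))) s :>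
            (\<mu>0 - \<mu>1) * Gm (\<mu>1 + s * (\<mu>0 - \<mu>1)) (t1 + s * (t0 - t1))
              + (t0 - t1) * Gt (\<mu>1 + s * (\<mu>0 - \<mu>1)) (t1 + s * (t0 - t1))" by (rule dline)
        next
          fix s :: real assume s: "0 \<le> s" "s \<le> 1"
          from inb[OF b1 b0(1) b2 b0(2) s] have
            "Gm (\<mu>1 + s * (\<mu>0 - \<mu>1)) (t1 + s * (t0 - t1)) > 0"
            "Gt (\<mu>1 + s * (\<mu>0 - \<mu>1)) (t1 + s * (t0 - t1)) < 0" by auto
          moreover have "\<mu>0 - \<mu>1 \<ge> 0" "t0 - t1 < 0" using le tlt by auto
          ultimately have "(\<mu>0 - \<mu>1) * Gm (\<mu>1 + s * (\<mu>0 - \<mu>1)) (t1 + s * (t0 - t1)) \<ge> 0"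
              "(t0 - t1) * Gt (\<mu>1 + s * (\<mu>0 - \<mu>1)) (t1 + s * (t0 - t1)) > 0"
            by (auto intro: mult_nonneg_nonneg mult_neg_neg)
          then show "(\<mu>0 - \<mu>1) * Gm (\<mu>1 + s * (\<mu>0 - \<mu>1)) (t1 + s * (t0 - t1))
              + (t0 - t1) * Gt (\<mu>1 + s * (\<mu>0 - \<mu>1)) (t1 + s * (t0 - t1)) > 0"
            by linarith
        qed
        then show False using G0 G1 by simp
      qed
      have n: "t0 - \<mu>0 < t1 - \<mu>1"
      proof (rule ccontr)
        assume "\<not> t0 - \<mu>0 < t1 - \<mu>1"
        then have le: "t1 - t0 \<le> \<mu>1 - \<mu>0" by simp
        have "G \<mu>0 t0 < G \<mu>1 t1"
        proof (rule line_incr[where G=G and ?m1.0="\<mu>0" and ?t1.0=t0 and ?m2.0="\<mu>1" and ?t2.0=t1,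
            where D="\<lambda>s. (\<mu>1 - \<mu>0) * Gm (\<mu>0 + s * (\<mu>1 - \<mu>0)) (t0 + s * (t1 - t0))
              + (t1 - t0) * Gt (\<mu>0 + s * (\<mu>1 - \<mu>0)) (t0 + s * (t1 - t0))"])
          fix s :: real
          show "DERIV (\<lambda>s. G (\<mu>0 + s * (\<mu>1 - \<mu>0)) (t0 + s * (t1 - t0))) s :>
            (\<mu>1 - \<mu>0) * Gm (\<mu>0 + s * (\<mu>1 - \<mu>0)) (t0 + s * (t1 - t0))
              + (t1 - t0) * Gt (\<mu>0 + s * (\<mu>1 - \<mu>0)) (t0 + s * (t1 - t0))" by (rule dline)
        next
          fix s :: real assume s: "0 \<le> s" "s \<le> 1"
          define gm' where "gm' = Gm (\<mu>0 + s * (\<mu>1 - \<mu>0)) (t0 + s * (t1 - t0))"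
          define gt' where "gt' = Gt (\<mu>0 + s * (\<mu>1 - \<mu>0)) (t0 + s * (t1 - t0))"
          from inb[OF b0(1) b1 b0(2) b2 s] have h: "gm' > 0" "gm' + gt' > 0"
            by (auto simp: gm'_def gt'_def)
          have "(\<mu>1 - \<mu>0) * gm' + (t1 - t0) * gt' = ((\<mu>1 - \<mu>0) - (t1 - t0)) * gm' + (t1 - t0) * (gm' + gt')"
            by (simp add: algebra_simps)
          moreover have "((\<mu>1 - \<mu>0) - (t1 - t0)) * gm' \<ge> 0" using le h by simp
          moreover have "(t1 - t0) * (gm' + gt') > 0" using tlt h by simp
          ultimately show "(\<mu>1 - \<mu>0) * Gm (\<mu>0 + s * (\<mu>1 - \<mu>0)) (t0 + s * (t1 - t0))
              + (t1 - t0) * Gt (\<mu>0 + s * (\<mu>1 - \<mu>0)) (t0 + s * (t1 - t0)) > 0"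
            by (simp add: gm'_def gt'_def)
        qed
        then show False using G0 G1 by simp
      qed
      show "Nstar T0 < Nstar T" using m N0 N1 by (simp add: \<mu>0_def \<mu>1_def)
      have "ln (Dstar T0) < ln (Dstar T)" using n eq0 eq1 by (simp add: \<nu>0_def)
      then show "Dstar T0 < Dstar T" using D0 D1 by simp
    qed
  qed
  show ?thesis
  proof (intro ballI impI)
    fix T1 T2 assume T1: "T1 \<in> I" and T2: "T2 \<in> I" and lt: "T1 < T2"
    have sub: "{T1..T2} \<subseteq> I" by (auto intro: mem_is_interval_1_I[OF I_interval T1 T2])
    have loc': "\<exists>\<delta>>0. \<forall>T. a < T \<and> T < a + \<delta> \<and> T \<le> T2 \<longrightarrow> Nstar a < Nstar T \<and> Dstar a < Dstar T"
      if "T1 \<le> a" "a < T2" for a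
    proof -
      have aI: "a \<in> I" using sub that by auto
      obtain \<delta> where "\<delta> > 0" "\<forall>T. T \<in> I \<and> a < T \<and> T < a + \<delta> \<longrightarrow> Nstar a < Nstar T \<and> Dstar a < Dstar T"
        using loc[OF aI] by blast
      moreover have "T \<in> I" if "a < T" "T \<le> T2" for T using sub that \<open>T1 \<le> a\<close> by auto
      ultimately show ?thesis by (intro exI[of _ \<delta>]) auto
    qed
    have "Nstar T1 < Nstar T2"
    proof (rule local_to_global[OF lt continuous_on_subset[OF cont_N sub]])
      fix a assume "T1 \<le> a" "a < T2"
      from loc'[OF this] obtain \<delta> where "\<delta> > 0"
        "\<forall>T. a < T \<and> T < a + \<delta> \<and> T \<le> T2 \<longrightarrow> Nstar a < Nstar T \<and> Dstar a < Dstar T" by blast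
      then show "\<exists>\<delta>>0. \<forall>T. a < T \<and> T < a + \<delta> \<and> T \<le> T2 \<longrightarrow> Nstar a < Nstar T"
        by (intro exI[of _ \<delta>]) simp
    qed
    moreover have "Dstar T1 < Dstar T2"
    proof (rule local_to_global[OF lt continuous_on_subset[OF cont_D sub]])
      fix a assume "T1 \<le> a" "a < T2"
      from loc'[OF this] obtain \<delta> where "\<delta> > 0"
        "\<forall>T. a < T \<and> T < a + \<delta> \<and> T \<le> T2 \<longrightarrow> Nstar a < Nstar T \<and> Dstar a < Dstar T" by blast
      then show "\<exists>\<delta>>0. \<forall>T. a < T \<and> T < a + \<delta> \<and> T \<le> T2 \<longrightarrow> Dstar a < Dstar T"
        by (intro exI[of _ \<delta>]) simp
    qed
    ultimately show "Nstar T2 > Nstar T1 \<and> Dstar T2 > Dstar T1" by simp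
  qed
qed
end
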